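(* Let $g:(0,\infty)\to(0,\infty)$ be positive and nondecreasing with $\lim_{s\to0}g(s)/s=0$, and set $F(\lambda):=\int_\lambda^1\frac{ds}{g(s)}$ for $0<\lambda\le1$ (so that $F^{-1}:[0,\infty)\to(0,1]$ is well defined, continuous and strictly decreasing). Then for every $k>0$ there exists a constant $C>1$, depending only on $k$ and $g$, such that $$F^{-1}(t-k)\le C\,F^{-1}(t)\qquad\text{for all }t\ge k .$$ *)

theory Defs
  imports "HOL-Analysis.Analysis"
begin

definition F_of :: "(real \<Rightarrow> real) \<Rightarrow> real \<Rightarrow> real" where
  "F_of g l = integral {l..1} (\<lambda>s. 1 / g s)"

definition F_inv :: "(real \<Rightarrow> real) \<Rightarrow> real \<Rightarrow> real" where
  "F_inv g t = (THE l. 0 < l \<and> l \<le> 1 \<and> F_of g l = t)"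

end

theory Submission
  imports Defs
begin

theorem lemma4p12:
  fixes g :: "real \<Rightarrow> real" and k :: real
  assumes g_pos: "\<And>s. s > 0 \<Longrightarrow> g s > 0"
    and g_mono: "mono_on {0<..} g"
    and g_lim: "((\<lambda>s. g s / s) \<longlongrightarrow> 0) (at_right 0)"
    and k_pos: "k > 0"
  shows "\<exists>C>1. \<forall>t\<ge>k. F_inv g (t - k) \<le> C * F_inv g t"
proof -
  define f where "f = (\<lambda>s. 1 / g s)"
  have "\<forall>\<^sub>F s in at_right 0. dist (g s / s) 0 < 1"
    using tendstoD[OF g_lim] by simp
  then obtain d where d: "d > 0" "\<And>s. 0 < s \<Longrightarrow> s < d \<Longrightarrow> dist (g s / s) 0 < 1"
    unfolding eventually_at_right_field by auto
  define d' where "d' = min d 1"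
  have d': "0 < d'" "d' \<le> 1" "\<And>s. 0 < s \<Longrightarrow> s < d' \<Longrightarrow> g s < s"
  proof -
    fix s assume s: "0 < s" "s < d'"
    then have "\<bar>g s / s\<bar> < 1" using d(2)[of s] by (simp add: d'_def)
    then show "g s < s" using s by (simp add: abs_less_iff divide_less_eq)
  qed (use d in \<open>auto simp: d'_def\<close>)
  define M where "M = max 1 (g 1 / d')"
  have Mpos: "M > 0" by (simp add: M_def)
  have gM: "g s \<le> M * s" if "0 < s" "s \<le> 1" for s
  proof (cases "s < d'")
    case True
    then have "g s < s" using d' that by auto
    also have "s \<le> M * s" using that by (simp add: M_def)
    finally show ?thesis by simp
  next
    case False
    have "g s \<le> g 1" using g_mono that by (auto simp: mono_on_def)
    also have "g 1 = (g 1 / d') * d'" using d' by simp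
    also have "\<dots> \<le> M * s" using False d' g_pos[of 1]
      by (intro mult_mono) (auto simp: M_def)
    finally show ?thesis .
  qed
  have intf: "f integrable_on {a..b}" if "0 < a" for a b
  proof -
    have "mono_on {a..b} (\<lambda>s. - f s)"
      unfolding mono_on_def f_def
    proof (intro allI impI, elim conjE)
      fix r s assume "r \<in> {a..b}" "s \<in> {a..b}" "r \<le> s"
      then have "0 < r" "g r \<le> g s" using that g_mono by (auto simp: mono_on_def)
      then show "- (1 / g r) \<le> - (1 / g s)"
        using g_pos[of r] by (simp add: frac_le)
    qed
    from integrable_neg[OF integrable_on_mono_on[OF this]] show ?thesis by simp
  qed
  have low: "(ln b - ln a) / M \<le> integral {a..b} f" if "0 < a" "a \<le> b" "b \<le> 1" for a b
  proof -
    have "((\<lambda>s. 1 / s) has_integral (ln b - ln a)) {a..b}"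
    proof (rule fundamental_theorem_of_calculus[OF that(2)])
      fix x assume "x \<in> {a..b}"
      then have "x > 0" using that by auto
      then show "(ln has_vector_derivative 1 / x) (at x within {a..b})"
        by (auto intro!: derivative_eq_intros simp: has_real_derivative_iff_has_vector_derivative[symmetric])
    qed
    from has_integral_mult_right[OF this, of "1 / M"]
    have "((\<lambda>s. 1 / s * (1 / M)) has_integral (ln b - ln a) / M) {a..b}" by (simp add: mult.commute)
    moreover have "(f has_integral integral {a..b} f) {a..b}"
      using intf that by blast
    moreover have "1 / s * (1 / M) \<le> f s" if "s \<in> {a..b}" for s
    proof -
      have s: "0 < s" "s \<le> 1" using that \<open>0 < a\<close> \<open>b \<le> 1\<close> by auto
      have "g s \<le> M * s" using gM s by auto
      then have "1 / (M * s) \<le> 1 / g s" using g_pos[of s] s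
        by (intro divide_left_mono) auto
      then show ?thesis by (simp add: f_def mult.commute)
    qed
    ultimately show ?thesis by (rule has_integral_le)
  qed
  have Fsplit: "F_of g a = integral {a..b} f + F_of g b" if "0 < a" "a \<le> b" "b \<le> 1" for a b
    unfolding F_of_def f_def[symmetric]
    using Henstock_Kurzweil_Integration.integral_combine[OF that(2) that(3) intf[OF that(1)]] by simp
  have Fstrict: "F_of g b < F_of g a" if "0 < a" "a < b" "b \<le> 1" for a b
  proof -
    have "0 < (ln b - ln a) / M" using that Mpos by simp
    also have "\<dots> \<le> integral {a..b} f" using low that by auto
    finally show ?thesis using Fsplit[of a b] that by simp
  qed
  have F1: "F_of g 1 = 0" by (simp add: F_of_def)
  have ex1: "\<exists>!l. 0 < l \<and> l \<le> 1 \<and> F_of g l = t" if "t \<ge> 0" for t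
  proof -
    define l0 where "l0 = exp (- (M * t))"
    have l0: "0 < l0" "l0 \<le> 1" using that Mpos by (auto simp: l0_def)
    have "t = (ln 1 - ln l0) / M" using Mpos by (simp add: l0_def)
    also have "\<dots> \<le> integral {l0..1} f" using low[of l0 1] l0 by linarith
    also have "\<dots> = F_of g l0" by (simp add: F_of_def f_def)
    finally have tle: "t \<le> F_of g l0" .
    have cont: "continuous_on {l0..1} (F_of g)"
    proof -
      have "F_of g = (\<lambda>x. integral {x..1} f)" by (simp add: F_of_def f_def fun_eq_iff)
      then show ?thesis using indefinite_integral_continuous_1'[OF intf[OF l0(1)]] by simp
    qed
    obtain l where l: "l0 \<le> l" "l \<le> 1" "F_of g l = t"
      using IVT2'[of "F_of g" 1 t l0, OF _ tle l0(2) cont] F1 \<open>t \<ge> 0\<close> by auto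
    show ?thesis
    proof (rule ex1I[of _ l])
      show "0 < l \<and> l \<le> 1 \<and> F_of g l = t" using l l0 by auto
      fix l' assume l': "0 < l' \<and> l' \<le> 1 \<and> F_of g l' = t"
      show "l' = l"
      proof (rule ccontr)
        assume "l' \<noteq> l"
        then consider "l' < l" | "l < l'" by linarith
        then show False
          using Fstrict[of l' l] Fstrict[of l l'] l l' l0 by cases auto
      qed
    qed
  qed
  have Finv: "0 < F_inv g t \<and> F_inv g t \<le> 1 \<and> F_of g (F_inv g t) = t" if "t \<ge> 0" for t
    unfolding F_inv_def using theI'[OF ex1[OF that]] .
  define C where "C = exp (k * M)"
  have C1: "C > 1" using k_pos Mpos by (simp add: C_def)
  show ?thesis
  proof (intro exI[of _ C] conjI allI impI C1)
    fix t assume t: "t \<ge> k"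
    define a where "a = F_inv g t"
    define b where "b = F_inv g (t - k)"
    have a: "0 < a" "a \<le> 1" "F_of g a = t" using Finv[of t] t k_pos by (auto simp: a_def)
    have b: "0 < b" "b \<le> 1" "F_of g b = t - k" using Finv[of "t - k"] t by (auto simp: b_def)
    show "b \<le> C * a"
    proof (cases "b \<le> a")
      case True
      then show ?thesis using C1 a by (smt (verit) mult_le_cancel_right1)
    next
      case False
      then have "(ln b - ln a) / M \<le> integral {a..b} f" using low a b by auto
      also have "\<dots> = k" using Fsplit[of a b] False a b by simp
      finally have "ln b - ln a \<le> k * M" using Mpos by (simp add: divide_le_eq mult.commute)
      then have "ln b \<le> ln (C * a)" using a C1 by (simp add: C_def ln_mult)
      then show ?thesis using a b C1 by simp
    qed
  qed
qed

end
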